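(* Let $c,d\in\mathbb{Z}$ and $T=T(c,d,0,0)$, i.e. $T_{r,k}=c+rkd$ for all $r,k\ge 0$. Then for all $r\ge 1$ and $k\ge 2$, $$T_{r,k}=T_{r-1,k-1}+T_{0,r+k-2}+T_{1,r+k-3}+2(d-c).$$
   Context: A number triangle is an array of integers $T_{r,k}$ indexed by integers $r,k\ge 0$. For $c,d,d_1,d_2\in\mathbb{Z}$, the Generalized Rascal Triangle $T(c,d,d_1,d_2)$ is the number triangle with $T_{r,k}=c+kd_1+rd_2+rkd$. *)

theory Defs
  imports Main
begin

definition GRT :: "int \<Rightarrow> int \<Rightarrow> int \<Rightarrow> int \<Rightarrow> nat \<Rightarrow> nat \<Rightarrow> int" where
  "GRT c d d1 d2 r k = c + int k * d1 + int r * d2 + int r * int k * d"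

end

theory Submission
  imports Defs
begin

theorem mainTheorem13:
  fixes c d :: int and r k :: nat
  assumes "r \<ge> 1" and "k \<ge> 2"
  shows "GRT c d 0 0 r k
         = GRT c d 0 0 (r - 1) (k - 1) + GRT c d 0 0 0 (r + k - 2)
           + GRT c d 0 0 1 (r + k - 3) + 2 * (d - c)"
proof -
  obtain a b where ab: "r = Suc a" "k = Suc (Suc b)"
    using assms by (metis Suc_le_D Suc_1 Suc_le_mono One_nat_def)
  have e: "r + k - 3 = a + b" "r + k - 2 = Suc (a + b)" using ab by auto
  show ?thesis unfolding GRT_def e using ab by (simp add: algebra_simps)
qed

end
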